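(* (a) Let $M\ge0$, let $u_1,\dots,u_M$ be nonzero complex numbers, and let $u_0,z\in\mathbb{C}$ with $z\notin\{u_0,\dots,u_M\}$. Then \[ \frac{1}{z-u_0}=\sum_{k=0}^M\frac{1}{z-u_k}\prod_{j=k+1}^M\frac{1-u_0/u_j}{1-z/u_j}. \] (b) Let $u_1,u_2,\dots$ be nonzero complex numbers for which there is a constant $c>0$ with $|u_j|\ge c j^2$ for all $j\ge1$, and let $u_0,z\in\mathbb{C}$ with $z\notin\{u_0,u_1,u_2,\dots\}$. Then \[ \frac{1}{z-u_0}=\sum_{k=0}^\infty\frac{1}{z-u_k}\prod_{j=k+1}^\infty\frac{1-u_0/u_j}{1-z/u_j}, \] where the infinite products and the series converge. *)

theory Defs
  imports "HOL-Analysis.Analysis"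
begin

end

theory Submission
  imports Defs
begin



lemma alg_step:
  fixes a v z :: complex
  assumes "v \<noteq> 0" "v \<noteq> z" "z \<noteq> a"
  shows "(1 - a / v) / (1 - z / v) * (1 / (z - a)) + 1 / (z - v) = 1 / (z - a)"
proof -
  have n1: "v - z \<noteq> 0" "z - a \<noteq> 0" "z - v \<noteq> 0" using assms by auto
  have e1: "(1 - a / v) / (1 - z / v) = (v - a) / (v - z)"
    using assms n1 by (simp add: field_simps)
  have "1 / (z - v) = - (1 / (v - z))" by (metis minus_diff_eq divide_minus_right)
  hence "(v - a) / (v - z) * (1 / (z - a)) + 1 / (z - v) = ((v - a) / (z - a) - 1) / (v - z)"
    by (simp add: diff_divide_distrib mult.commute)
  also have "(v - a) / (z - a) - 1 = (v - z) / (z - a)" using n1 by (simp add: field_simps)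
  also have "(v - z) / (z - a) / (v - z) = 1 / (z - a)" using n1 by simp
  finally show ?thesis unfolding e1 .
qed

lemma part_a:
  fixes u :: "nat \<Rightarrow> complex"
  assumes "\<forall>j\<in>{1..M}. u j \<noteq> 0" "z \<notin> u ` {0..M}"
  shows "1 / (z - u 0) = (\<Sum>k=0..M. 1 / (z - u k) * (\<Prod>j=k+1..M. (1 - u 0 / u j) / (1 - z / u j)))"
  using assms
proof (induction M)
  case 0
  then show ?case by simp
next
  case (Suc M)
  define F where "F j = (1 - u 0 / u j) / (1 - z / u j)" for j
  have v0: "u (Suc M) \<noteq> 0" using Suc.prems by auto
  have vz: "u (Suc M) \<noteq> z" using Suc.prems by force
  have z0: "z \<noteq> u 0" using Suc.prems by force
  have pM: "\<forall>j\<in>{1..M}. u j \<noteq> 0" "z \<notin> u ` {0..M}" using Suc.prems by auto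
  have IH: "1 / (z - u 0) = (\<Sum>k=0..M. 1 / (z - u k) * (\<Prod>j=k+1..M. F j))"
    using Suc.IH[OF pM] by (simp add: F_def)
  have "(\<Sum>k=0..Suc M. 1 / (z - u k) * (\<Prod>j=k+1..Suc M. F j))
      = (\<Sum>k=0..M. 1 / (z - u k) * (\<Prod>j=k+1..Suc M. F j)) + 1 / (z - u (Suc M))"
    by simp
  also have "(\<Sum>k=0..M. 1 / (z - u k) * (\<Prod>j=k+1..Suc M. F j))
      = F (Suc M) * (\<Sum>k=0..M. 1 / (z - u k) * (\<Prod>j=k+1..M. F j))"
    by (simp add: sum_distrib_left prod.nat_ivl_Suc' mult_ac)
  also have "F (Suc M) * (\<Sum>k=0..M. 1 / (z - u k) * (\<Prod>j=k+1..M. F j)) + 1 / (z - u (Suc M))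
      = F (Suc M) * (1 / (z - u 0)) + 1 / (z - u (Suc M))"
    by (simp only: IH[symmetric])
  also have "\<dots> = 1 / (z - u 0)"
    unfolding F_def using v0 vz z0 by (rule alg_step)
  finally show ?case by (simp add: F_def)
qed

lemma tail_to_1:
  fixes f :: "nat \<Rightarrow> complex"
  assumes sf: "summable (\<lambda>i. norm (f i - 1))"
  shows "(\<lambda>k. prodinf (\<lambda>i. f (i + k))) \<longlonglongrightarrow> 1"
proof -
  define T where "T k = (\<Sum>i. norm (f (i + k) - 1))" for k
  have T0: "T \<longlonglongrightarrow> 0"
  proof -
    have Teq: "T = (\<lambda>k. (\<Sum>i. norm (f i - 1)) - (\<Sum>i<k. norm (f i - 1)))"
      unfolding T_def by (rule ext, rule suminf_minus_initial_segment[OF sf])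
    have "(\<lambda>k. (\<Sum>i. norm (f i - 1)) - (\<Sum>i<k. norm (f i - 1))) \<longlonglongrightarrow> (\<Sum>i. norm (f i - 1)) - (\<Sum>i. norm (f i - 1))"
      by (intro tendsto_intros summable_LIMSEQ sf)
    then show ?thesis by (simp add: Teq)
  qed
  have bound: "norm (prodinf (\<lambda>i. f (i + k)) - 1) \<le> exp (T k) - 1" for k
  proof -
    have sk: "summable (\<lambda>i. norm (f (i + k) - 1))"
      using summable_ignore_initial_segment[OF sf] .
    have cp: "convergent_prod (\<lambda>i. f (i + k))"
      by (intro abs_convergent_prod_imp_convergent_prod summable_imp_abs_convergent_prod sk)
    have L: "(\<lambda>n. norm ((\<Prod>i\<le>n. f (i + k)) - 1)) \<longlonglongrightarrow> norm (prodinf (\<lambda>i. f (i + k)) - 1)"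
      by (intro tendsto_intros convergent_prod_LIMSEQ cp)
    show ?thesis
    proof (rule LIMSEQ_le_const2[OF L], intro exI allI impI)
      fix n
      have "norm ((\<Prod>i\<le>n. f (i + k)) - 1) = norm ((\<Prod>i\<le>n. 1 + (f (i + k) - 1)) - 1)"
        by simp
      also have "\<dots> \<le> (\<Prod>i\<le>n. 1 + norm (f (i + k) - 1)) - 1"
        by (rule norm_prod_minus1_le_prod_minus1)
      also have "(\<Prod>i\<le>n. 1 + norm (f (i + k) - 1)) \<le> exp (\<Sum>i\<le>n. norm (f (i + k) - 1))"
        by (rule prod_le_exp_sum) auto
      also have "(\<Sum>i\<le>n. norm (f (i + k) - 1)) \<le> T k"
        unfolding T_def by (rule sum_le_suminf[OF sk]) auto
      finally show "norm ((\<Prod>i\<le>n. f (i + k)) - 1) \<le> exp (T k) - 1" by simp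
    qed
  qed
  have E: "(\<lambda>k. exp (T k) - 1) \<longlonglongrightarrow> 0"
    using tendsto_diff[OF tendsto_exp[OF T0] tendsto_const[of 1]] by simp
  have "(\<lambda>k. prodinf (\<lambda>i. f (i + k)) - 1) \<longlonglongrightarrow> 0"
    by (rule Lim_null_comparison[OF always_eventually E]) (use bound in auto)
  then show ?thesis using Lim_null by blast
qed

lemma part_b:
  fixes u :: "nat \<Rightarrow> complex" and z :: complex and c :: real
  assumes c: "c > 0" and uj: "\<forall>j\<ge>1. u j \<noteq> 0 \<and> norm (u j) \<ge> c * (real j)^2"
    and zu: "z \<notin> range u"
  shows "\<exists>P::nat \<Rightarrow> complex.
               (\<forall>k. (\<lambda>i. (1 - u 0 / u (i + k + 1)) / (1 - z / u (i + k + 1))) has_prod P k) \<and>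
               (\<lambda>k. 1 / (z - u k) * P k) sums (1 / (z - u 0))"
proof -
  define g where "g j = (1 - u 0 / u j) / (1 - z / u j)" for j
  define f where "f i = g (i + 1)" for i
  define P where "P k = prodinf (\<lambda>i. f (i + k))" for k
  have zne: "z \<noteq> u j" for j using zu by auto
  define K where "K = 2 * norm (z - u 0) / c"
  have ev: "eventually (\<lambda>j. norm (norm (g j - 1)) \<le> K * inverse (real j ^ 2)) sequentially"
  proof (rule eventually_sequentiallyI)
    fix j :: nat
    assume j: "j \<ge> nat \<lceil>2 * norm z / c\<rceil> + 1"
    hence j1: "j \<ge> 1" by simp
    have "real j \<ge> 2 * norm z / c" using j by linarith
    moreover have "real j ^ 2 \<ge> real j" using j1 by (simp add: power2_eq_square)
    ultimately have "real j ^ 2 \<ge> 2 * norm z / c" by linarith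
    hence hz: "c * real j ^ 2 \<ge> 2 * norm z" using c by (simp add: field_simps)
    have v0: "u j \<noteq> 0" and vb: "norm (u j) \<ge> c * real j ^ 2" using uj j1 by auto
    have vz: "u j - z \<noteq> 0" using zne[of j] by auto
    have eq: "g j - 1 = (z - u 0) / (u j - z)"
      unfolding g_def using v0 vz by (simp add: field_simps)
    have nb: "norm (u j - z) \<ge> c * real j ^ 2 / 2"
      using norm_triangle_ineq2[of "u j" z] vb hz by linarith
    have pos: "c * real j ^ 2 / 2 > 0" using c j1 by simp
    have "norm (g j - 1) = norm (z - u 0) / norm (u j - z)" by (simp add: eq norm_divide)
    also have "\<dots> \<le> norm (z - u 0) / (c * real j ^ 2 / 2)"
      by (rule divide_left_mono[OF nb]) (use pos vz in auto)
    also have "\<dots> = K * inverse (real j ^ 2)" unfolding K_def using c by (simp add: field_simps)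
    finally show "norm (norm (g j - 1)) \<le> K * inverse (real j ^ 2)" by simp
  qed
  have sg: "summable (\<lambda>j. norm (g j - 1))"
    by (rule summable_comparison_test_ev[OF ev]) (intro summable_mult inverse_power_summable, simp)
  have sf: "summable (\<lambda>i. norm (f i - 1))"
    unfolding f_def using summable_ignore_initial_segment[OF sg, of 1] by simp
  have cp: "convergent_prod (\<lambda>i. f (i + k))" for k
    by (intro abs_convergent_prod_imp_convergent_prod summable_imp_abs_convergent_prod
        summable_ignore_initial_segment sf)
  have hp: "\<forall>k. (\<lambda>i. (1 - u 0 / u (i + k + 1)) / (1 - z / u (i + k + 1))) has_prod P k"
  proof
    fix k
    have "(\<lambda>i. f (i + k)) has_prod P k" unfolding P_def using cp[of k] by blast
    moreover have "(\<lambda>i. f (i + k)) = (\<lambda>i. (1 - u 0 / u (i + k + 1)) / (1 - z / u (i + k + 1)))"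
      by (simp add: f_def g_def)
    ultimately show "(\<lambda>i. (1 - u 0 / u (i + k + 1)) / (1 - z / u (i + k + 1))) has_prod P k" by simp
  qed
  have split: "P k = (\<Prod>j=k+1..N. g j) * P N" if "k \<le> N" for k N
  proof -
    have "(\<lambda>i. f (i + k)) has_prod ((\<Prod>i<N-k. f (i + k)) * (\<Prod>i. f (i + (N - k) + k)))"
      by (rule has_prod_ignore_initial_segment'[OF cp[of k]])
    moreover have "(\<lambda>i. f (i + (N - k) + k)) = (\<lambda>i. f (i + N))" using that by simp
    ultimately have "P k = (\<Prod>i<N-k. f (i + k)) * P N"
      unfolding P_def using cp[of k] has_prod_unique by (metis convergent_prod_has_prod)
    moreover have "(\<Prod>i<N-k. f (i + k)) = (\<Prod>j=k+1..N. g j)"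
      using that
    proof (induction N)
      case 0 then show ?case by simp
    next
      case (Suc N)
      show ?case
      proof (cases "k = Suc N")
        case True then show ?thesis by simp
      next
        case False
        hence kN: "k \<le> N" using Suc.prems by simp
        have "(\<Prod>i<Suc N-k. f (i + k)) = (\<Prod>i<N-k. f (i + k)) * f (N - k + k)"
          using kN by (simp add: Suc_diff_le)
        also have "\<dots> = (\<Prod>j=k+1..N. g j) * g (Suc N)"
          using Suc.IH[OF kN] kN by (simp add: f_def)
        also have "\<dots> = (\<Prod>j=k+1..Suc N. g j)"
          using kN by (simp add: prod.nat_ivl_Suc' mult.commute)
        finally show ?thesis .
      qed
    qed
    ultimately show ?thesis by simp
  qed
  have PN: "P \<longlonglongrightarrow> 1" unfolding P_def by (rule tail_to_1[OF sf])
  have ps: "(\<Sum>k\<le>N. 1 / (z - u k) * P k) = P N * (1 / (z - u 0))" for N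
  proof -
    have a: "1 / (z - u 0) = (\<Sum>k=0..N. 1 / (z - u k) * (\<Prod>j=k+1..N. g j))"
      unfolding g_def by (rule part_a) (use uj zu in auto)
    have "(\<Sum>k\<le>N. 1 / (z - u k) * P k) = (\<Sum>k=0..N. 1 / (z - u k) * ((\<Prod>j=k+1..N. g j) * P N))"
      by (simp add: atMost_atLeast0 split)
    also have "\<dots> = P N * (\<Sum>k=0..N. 1 / (z - u k) * (\<Prod>j=k+1..N. g j))"
      by (simp add: sum_distrib_left mult_ac)
    finally show ?thesis using a by simp
  qed
  have "(\<lambda>k. 1 / (z - u k) * P k) sums (1 / (z - u 0))"
    unfolding sums_def_le ps
    using tendsto_mult[OF PN tendsto_const[of "1 / (z - u 0)"]] by simp
  with hp show ?thesis by blast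
qed

theorem lemma5p1:
  shows "(\<forall>(M::nat) (u::nat \<Rightarrow> complex) (z::complex).
            (\<forall>j\<in>{1..M}. u j \<noteq> 0) \<and> z \<notin> u ` {0..M} \<longrightarrow>
            1 / (z - u 0) =
              (\<Sum>k=0..M. 1 / (z - u k) *
                 (\<Prod>j=k+1..M. (1 - u 0 / u j) / (1 - z / u j))))
       \<and> (\<forall>(u::nat \<Rightarrow> complex) (z::complex) (c::real).
            c > 0 \<and> (\<forall>j\<ge>1. u j \<noteq> 0 \<and> norm (u j) \<ge> c * (real j)^2) \<and>
            z \<notin> range u \<longrightarrow>
            (\<exists>P::nat \<Rightarrow> complex.
               (\<forall>k. (\<lambda>i. (1 - u 0 / u (i + k + 1)) / (1 - z / u (i + k + 1))) has_prod P k) \<and>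
               (\<lambda>k. 1 / (z - u k) * P k) sums (1 / (z - u 0))))"
proof (intro conjI allI impI)
  fix M and u :: "nat \<Rightarrow> complex" and z
  assume "(\<forall>j\<in>{1..M}. u j \<noteq> 0) \<and> z \<notin> u ` {0..M}"
  then show "1 / (z - u 0) = (\<Sum>k=0..M. 1 / (z - u k) * (\<Prod>j=k+1..M. (1 - u 0 / u j) / (1 - z / u j)))"
    using part_a by blast
next
  fix u :: "nat \<Rightarrow> complex" and z and c :: real
  assume "c > 0 \<and> (\<forall>j\<ge>1. u j \<noteq> 0 \<and> norm (u j) \<ge> c * (real j)^2) \<and> z \<notin> range u"
  then show "\<exists>P::nat \<Rightarrow> complex.
               (\<forall>k. (\<lambda>i. (1 - u 0 / u (i + k + 1)) / (1 - z / u (i + k + 1))) has_prod P k) \<and>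
               (\<lambda>k. 1 / (z - u k) * P k) sums (1 / (z - u 0))"
    using part_b by blast
qed

end
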